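(* Consider a memoryless channel with finite input alphabet $\mathcal X$ and arbitrary output alphabet $\mathcal Y$, with equiprobable inputs. Then for every real $k\ge1$, $$\mathbb{E}\Bigl[\bigl|i(X;Y)-I(X;Y)\bigr|^k\Bigr]\le\Bigl(2\log|\mathcal X|+\frac{k}{\ln2}\bigl(1+|\mathcal X|^{1/k}\bigr)\Bigr)^k.$$
   Context: $X$ is uniform on $\mathcal X$ and $Y$ is the channel output, so that $(X,Y)\sim P_XP_{Y|X}$. Logarithms are base 2 and $\ln$ is the natural logarithm. The information density is $$i(x;y)=\log\frac{P_{Y|X}(y|x)}{P_Y(y)},\qquad P_Y(y)=\frac1{|\mathcal X|}\sum_{x'}P_{Y|X}(y|x'),$$ and $I(X;Y)=\mathbb{E}[i(X;Y)]$ is the mutual information. *)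

theory Defs
  imports "HOL-Analysis.Analysis"
begin

text \<open>Channel with finite input alphabet (the finite type 'a, uniform input distribution)
  and arbitrary output measurable space, described by transition densities
  W x y = P_{Y|X}(y|x) with respect to a reference measure mu on the output space.\<close>

definition out_density :: "('a::finite \<Rightarrow> 'b \<Rightarrow> real) \<Rightarrow> 'b \<Rightarrow> real" where
  "out_density W y = (\<Sum>x\<in>UNIV. W x y) / real CARD('a)"

definition info_density :: "('a::finite \<Rightarrow> 'b \<Rightarrow> real) \<Rightarrow> 'a \<Rightarrow> 'b \<Rightarrow> real" where
  "info_density W x y = log 2 (W x y / out_density W y)"

definition mutual_info :: "'b measure \<Rightarrow> ('a::finite \<Rightarrow> 'b \<Rightarrow> real) \<Rightarrow> real" where
  "mutual_info \<mu> W = (\<Sum>x\<in>UNIV. \<integral>y. W x y * info_density W x y \<partial>\<mu>) / real CARD('a)"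

end

theory Submission imports Defs begin

lemma conv_bound:
  fixes a b c k :: real
  assumes a: "a \<ge> 0" and b: "b \<ge> 0" and c: "c > 0" and k: "k \<ge> 1"
  shows "(a+b) powr k \<le> (a+c) powr (k-1) * (a + c powr (1-k) * b powr k)"
proof (cases "b = 0")
  case True
  have "a powr k \<le> (a+c) powr (k-1) * a"
  proof (cases "a = 0")
    case False
    have "a powr k = a powr (k-1) * a" using False a by (simp add: powr_diff)
    also have "\<dots> \<le> (a+c) powr (k-1) * a"
      using a c k by (intro mult_right_mono powr_mono2) auto
    finally show ?thesis .
  qed (use k in simp)
  then show ?thesis using True k by simp
next
  case False
  define s where "s = a + c"
  have s: "s > 0" using a c s_def by simp
  define u where "u = c / s"
  have u: "0 \<le> u" "u \<le> 1" using a c s by (auto simp: u_def s_def)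
  have "((1 - u) *\<^sub>R 1 + u *\<^sub>R (b/c)) powr k \<le> (1 - u) * 1 powr k + u * (b/c) powr k"
    using convex_onD[OF powr_convex[OF k], of u 1 "b/c"] u b c False by simp
  moreover have "(1 - u) *\<^sub>R 1 + u *\<^sub>R (b/c) = (a+b)/s"
  proof -
    have e1: "1 - u = a/s" using s by (simp add: u_def s_def field_simps)
    have "(1 - u) *\<^sub>R 1 + u *\<^sub>R (b/c) = a/s + (c/s)*(b/c)" unfolding e1 by (simp add: u_def)
    also have "a/s + (c/s)*(b/c) = (a+b)/s" using s c by (simp add: field_simps)
    finally show ?thesis .
  qed
  moreover have "1 - u = a / s" using s by (simp add: u_def s_def field_simps)
  ultimately have *: "((a+b)/s) powr k \<le> a/s + (c/s) * (b powr k / c powr k)"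
    using b c by (simp add: u_def powr_divide)
  have "(a+b) powr k = s powr k * ((a+b)/s) powr k"
    using s a b by (simp add: powr_divide)
  also have "\<dots> \<le> s powr k * (a/s + (c/s) * (b powr k / c powr k))"
    using * s by (intro mult_left_mono) auto
  also have "\<dots> = s powr (k-1) * (a + c powr (1-k) * b powr k)"
    using s c by (simp add: powr_diff field_simps)
  finally show ?thesis by (simp add: s_def)
qed

lemma tail_bound:
  fixes t k :: real
  assumes t: "t > 0" and k: "k \<ge> 1"
  shows "t * (max 0 (- log 2 t)) powr k \<le> (k / ln 2) powr k"
proof (cases "t < 1")
  case False
  then have "max 0 (- log 2 t) = 0" by simp
  then show ?thesis using k by simp
next
  case True
  define u where "u = t powr (1/k)"
  have u: "u > 0" using t by (simp add: u_def)
  have tu: "t = u powr k" using t k by (simp add: u_def powr_powr)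
  have lt: "ln t = k * ln u" using t k by (simp add: u_def ln_powr)
  have "- log 2 t = k * (- ln u) / ln 2" using lt by (simp add: log_def)
  moreover have "- log 2 t > 0" using True t by simp
  ultimately have m: "max 0 (- log 2 t) = k * (- ln u) / ln 2" by simp
  have "- ln u = ln (1/u)" using u by (simp add: ln_div)
  also have "\<dots> \<le> 1/u" using u by (intro ln_le_minus_one[THEN order_trans]) auto
  finally have ul: "u * (- ln u) \<le> 1" using u by (simp add: field_simps)
  have nn: "0 \<le> k * (- ln u) / ln 2" using m by (metis max.cobounded1)
  have "t * (max 0 (- log 2 t)) powr k = u powr k * (k * (- ln u) / ln 2) powr k"
    unfolding m using tu by simp
  also have "\<dots> = (u * (k * (- ln u) / ln 2)) powr k"
    using powr_mult[of u "k * (- ln u) / ln 2" k] u nn by simp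
  also have "\<dots> \<le> (k / ln 2) powr k"
  proof (rule powr_mono2)
    show "0 \<le> u * (k * (- ln u) / ln 2)" using u nn by (intro mult_nonneg_nonneg) auto
    have "u * (k * (- ln u) / ln 2) = (u * (- ln u)) * (k / ln 2)" by simp
    also have "\<dots> \<le> 1 * (k / ln 2)" using ul k by (intro mult_right_mono) auto
    finally show "u * (k * (- ln u) / ln 2) \<le> k / ln 2" by simp
  qed (use k in auto)
  finally show ?thesis .
qed

lemma pointwise_bound:
  fixes w p n I k :: real
  assumes w: "w \<ge> 0" and p: "p \<ge> 0" and wp: "w \<le> n * p" and n: "n \<ge> 1"
    and I: "\<bar>I\<bar> \<le> log 2 n" and k: "k \<ge> 1"
  shows "w * \<bar>log 2 (w / p) - I\<bar> powr k
     \<le> (2 * log 2 n + k / ln 2 * (1 + n powr (1/k))) powr (k-1)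
        * ((2 * log 2 n) * w + (k / ln 2 * (1 + n powr (1/k))) * p)"
proof -
  define a where "a = 2 * log 2 n"
  define c where "c = k / ln 2 * (1 + n powr (1/k))"
  define s where "s = a + c"
  have a: "a \<ge> 0" using n by (simp add: a_def)
  have c: "c > 0" using k by (simp add: c_def add_pos_nonneg)
  have s: "s > 0" using a c by (simp add: s_def)
  have kc: "k / ln 2 \<le> c"
  proof -
    have "k / ln 2 * 1 \<le> k / ln 2 * (1 + n powr (1/k))" using k by (intro mult_left_mono) auto
    then show ?thesis by (simp add: c_def)
  qed
  show ?thesis
  proof (cases "w = 0")
    case True
    then show ?thesis using a c s p k by (simp add: a_def[symmetric] c_def[symmetric] s_def[symmetric])
  next
    case False
    then have wpos: "w > 0" using w by simp
    have ppos: "p > 0" proof (rule ccontr)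
      assume "\<not> p > 0"
      then have "n * p \<le> 0" using n by (simp add: mult_nonneg_nonpos)
      then show False using wpos wp by simp
    qed
    define t where "t = w / p"
    have t: "t > 0" "t \<le> n" using wpos ppos wp by (auto simp: t_def field_simps)
    define L where "L = log 2 t"
    have Ln: "L \<le> log 2 n" using t by (simp add: L_def)
    define b where "b = max 0 (- L)"
    have b: "b \<ge> 0" by (simp add: b_def)
    have diff: "\<bar>L - I\<bar> \<le> a + b" using Ln I b by (auto simp: a_def b_def abs_le_iff)
    have "\<bar>L - I\<bar> powr k \<le> (a + b) powr k" using diff k by (intro powr_mono2) auto
    also have "\<dots> \<le> s powr (k-1) * (a + c powr (1-k) * b powr k)"
      unfolding s_def using conv_bound[OF a b c k] .
    finally have A: "\<bar>L - I\<bar> powr k \<le> s powr (k-1) * (a + c powr (1-k) * b powr k)" .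
    have tb: "t * b powr k \<le> (k / ln 2) powr k" unfolding b_def L_def using tail_bound[OF t(1) k] .
    have "w * b powr k = p * (t * b powr k)" using ppos by (simp add: t_def)
    also have "\<dots> \<le> p * (k / ln 2) powr k" using tb ppos by (intro mult_left_mono) auto
    also have "\<dots> \<le> p * c powr k" using kc k ppos by (intro mult_left_mono powr_mono2) auto
    finally have B: "w * b powr k \<le> p * c powr k" .
    have "w * \<bar>L - I\<bar> powr k \<le> w * (s powr (k-1) * (a + c powr (1-k) * b powr k))"
      using A w by (intro mult_left_mono) auto
    also have "\<dots> = s powr (k-1) * (a * w + c powr (1-k) * (w * b powr k))" by (simp add: algebra_simps)
    also have "\<dots> \<le> s powr (k-1) * (a * w + c powr (1-k) * (p * c powr k))"
      using B s c by (intro mult_left_mono add_left_mono) auto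
    also have "c powr (1-k) * (p * c powr k) = c * p"
      using c by (simp add: powr_diff field_simps)
    finally show ?thesis by (simp add: L_def t_def a_def c_def s_def)
  qed
qed
theorem lemma2:
  fixes \<mu> :: "'b measure" and W :: "'a::finite \<Rightarrow> 'b \<Rightarrow> real" and k :: real
  assumes meas: "\<And>x. W x \<in> borel_measurable \<mu>"
    and nonneg: "\<And>x y. y \<in> space \<mu> \<Longrightarrow> W x y \<ge> 0"
    and prob: "\<And>x. (\<integral>\<^sup>+ y. ennreal (W x y) \<partial>\<mu>) = 1"
    and k: "k \<ge> 1"
  shows "ennreal (1 / real CARD('a)) *
           (\<Sum>x\<in>UNIV. \<integral>\<^sup>+ y. ennreal (W x y * \<bar>info_density W x y - mutual_info \<mu> W\<bar> powr k) \<partial>\<mu>)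
         \<le> ennreal ((2 * log 2 (real CARD('a))
                      + k / ln 2 * (1 + real CARD('a) powr (1 / k))) powr k)"
proof -
  note meas[measurable]
  define n where "n = real CARD('a)"
  have n: "n \<ge> 1" by (simp add: n_def)
  define p where "p = out_density W"
  have p_eq: "\<And>y. p y = (\<Sum>x\<in>UNIV. W x y) / n" by (simp add: p_def out_density_def n_def)
  have p_meas[measurable]: "p \<in> borel_measurable \<mu>" unfolding p_eq[abs_def] by measurable
  have p_nn: "\<And>y. y \<in> space \<mu> \<Longrightarrow> p y \<ge> 0" using nonneg n by (simp add: p_eq sum_nonneg)
  have Wp: "\<And>x y. y \<in> space \<mu> \<Longrightarrow> W x y \<le> n * p y"
  proof -
    fix x y assume y: "y \<in> space \<mu>"
    have "W x y \<le> (\<Sum>x\<in>UNIV. W x y)"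
      by (rule member_le_sum) (use nonneg y in auto)
    then show "W x y \<le> n * p y" using n by (simp add: p_eq)
  qed
  have intW: "\<And>x. integrable \<mu> (W x) \<and> integral\<^sup>L \<mu> (W x) = 1"
    using nn_integral_eq_integrable[of "W _" \<mu> 1] prob nonneg by (simp add: AE_I2)
  have intp: "integrable \<mu> p" unfolding p_eq[abs_def] using intW by auto
  have intp1: "integral\<^sup>L \<mu> p = 1"
    unfolding p_eq[abs_def] using intW n by (simp add: n_def)
  have id_meas[measurable]: "\<And>x. info_density W x \<in> borel_measurable \<mu>"
    unfolding info_density_def[abs_def] out_density_def by measurable
  have lower: "\<And>x y. y \<in> space \<mu> \<Longrightarrow> (W x y - p y) / ln 2 \<le> W x y * info_density W x y"
  proof -
    fix x y assume y: "y \<in> space \<mu>"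
    show "(W x y - p y) / ln 2 \<le> W x y * info_density W x y"
    proof (cases "W x y = 0")
      case True then show ?thesis using p_nn[OF y] by simp
    next
      case False
      then have w: "W x y > 0" using nonneg[OF y, of x] by simp
      then have pp: "p y > 0" using Wp[OF y, of x] n
        by (smt (verit, best) mult_nonneg_nonpos)
      have "ln (p y / W x y) \<le> p y / W x y - 1" using w pp by (intro ln_le_minus_one) auto
      then have "1 - p y / W x y \<le> ln (W x y / p y)" using w pp by (simp add: ln_div)
      then have "W x y * (1 - p y / W x y) \<le> W x y * ln (W x y / p y)"
        using w by (intro mult_left_mono) auto
      moreover have "W x y * (1 - p y / W x y) = W x y - p y" using w by (simp add: field_simps)
      ultimately have "W x y - p y \<le> W x y * ln (W x y / p y)" by simp
      then show ?thesis
        by (simp add: info_density_def p_def[symmetric] log_def divide_right_mono)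
    qed
  qed
  have upper: "\<And>x y. y \<in> space \<mu> \<Longrightarrow> W x y * info_density W x y \<le> W x y * log 2 n"
  proof -
    fix x y assume y: "y \<in> space \<mu>"
    show "W x y * info_density W x y \<le> W x y * log 2 n"
    proof (cases "W x y = 0")
      case True then show ?thesis by simp
    next
      case False
      then have w: "W x y > 0" using nonneg[OF y, of x] by simp
      then have pp: "p y > 0" using Wp[OF y, of x] n
        by (smt (verit, best) mult_nonneg_nonpos)
      have "W x y / p y \<le> n" using Wp[OF y, of x] pp by (simp add: field_simps)
      then have "log 2 (W x y / p y) \<le> log 2 n" using w pp by (intro log_mono) auto
      then show ?thesis using w by (simp add: info_density_def p_def[symmetric])
    qed
  qed
  have intWi: "\<And>x. integrable \<mu> (\<lambda>y. W x y * info_density W x y)"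
  proof -
    fix x
    show "integrable \<mu> (\<lambda>y. W x y * info_density W x y)"
    proof (rule Bochner_Integration.integrable_bound[where f="\<lambda>y. W x y * log 2 n + (p y + W x y) / ln 2"])
      show "integrable \<mu> (\<lambda>y. W x y * log 2 n + (p y + W x y) / ln 2)"
        using intW intp by auto
      show "(\<lambda>y. W x y * info_density W x y) \<in> borel_measurable \<mu>" by measurable
      show "AE y in \<mu>. norm (W x y * info_density W x y) \<le> norm (W x y * log 2 n + (p y + W x y) / ln 2)"
      proof (rule AE_I2)
        fix y assume y: "y \<in> space \<mu>"
        have "0 \<le> W x y * log 2 n" using nonneg[OF y] n by simp
        moreover have "0 \<le> (p y + W x y) / ln 2" using nonneg[OF y] p_nn[OF y] by simp
        moreover have "(W x y - p y) / ln 2 \<ge> - ((p y + W x y) / ln 2)"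
          using nonneg[OF y] by (simp add: divide_right_mono field_simps)
        ultimately show "norm (W x y * info_density W x y) \<le> norm (W x y * log 2 n + (p y + W x y) / ln 2)"
          using lower[OF y, of x] upper[OF y, of x] by (simp add: abs_le_iff)
      qed
    qed
  qed
  have Ibounds: "\<And>x. 0 \<le> (\<integral>y. W x y * info_density W x y \<partial>\<mu>) \<and> (\<integral>y. W x y * info_density W x y \<partial>\<mu>) \<le> log 2 n"
  proof -
    fix x
    have "(\<integral>y. (W x y - p y) / ln 2 \<partial>\<mu>) \<le> (\<integral>y. W x y * info_density W x y \<partial>\<mu>)"
      using intW intp intWi lower by (intro integral_mono) auto
    moreover have "(\<integral>y. (W x y - p y) / ln 2 \<partial>\<mu>) = 0" using intW intp intp1 by simp
    moreover have "(\<integral>y. W x y * info_density W x y \<partial>\<mu>) \<le> (\<integral>y. W x y * log 2 n \<partial>\<mu>)"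
      using intW intWi upper by (intro integral_mono) auto
    moreover have "(\<integral>y. W x y * log 2 n \<partial>\<mu>) = log 2 n" using intW by simp
    ultimately show "?thesis x" using intW[of x] by simp
  qed
  define I where "I = mutual_info \<mu> W"
  have I: "\<bar>I\<bar> \<le> log 2 n"
  proof -
    have "0 \<le> (\<Sum>x\<in>UNIV. \<integral>y. W x y * info_density W x y \<partial>\<mu>)" using Ibounds by (intro sum_nonneg) auto
    moreover have "(\<Sum>x\<in>UNIV. \<integral>y. W x y * info_density W x y \<partial>\<mu>) \<le> (\<Sum>x\<in>(UNIV::'a set). log 2 n)"
      using Ibounds by (intro sum_mono) auto
    ultimately show ?thesis using n
      by (simp add: I_def mutual_info_def n_def[symmetric] abs_le_iff divide_le_eq mult.commute)
  qed
  define a where "a = 2 * log 2 n"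
  define c where "c = k / ln 2 * (1 + n powr (1/k))"
  define s where "s = a + c"
  have a: "a \<ge> 0" using n by (simp add: a_def)
  have c: "c > 0" using k by (simp add: c_def add_pos_nonneg)
  have s: "s > 0" using a c by (simp add: s_def)
  define f where "f x y = W x y * \<bar>info_density W x y - I\<bar> powr k" for x y
  have f_meas[measurable]: "\<And>x. f x \<in> borel_measurable \<mu>" unfolding f_def by measurable
  have pt: "\<And>y. y \<in> space \<mu> \<Longrightarrow> (\<Sum>x\<in>UNIV. ennreal (f x y)) \<le> (\<Sum>x\<in>UNIV. ennreal (s powr k) * ennreal (W x y))"
  proof -
    fix y assume y: "y \<in> space \<mu>"
    have fx: "f x y \<le> s powr (k-1) * (a * W x y + c * p y)" for x
      unfolding f_def info_density_def p_def[symmetric] a_def c_def s_def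
      using pointwise_bound[OF nonneg[OF y] p_nn[OF y] Wp[OF y] n I k] .
    have "(\<Sum>x\<in>UNIV. f x y) \<le> (\<Sum>x\<in>UNIV. s powr (k-1) * (a * W x y + c * p y))"
      by (intro sum_mono fx)
    also have "\<dots> = s powr (k-1) * (a * (\<Sum>x\<in>UNIV. W x y) + c * (n * p y))"
      by (simp add: sum_distrib_left sum.distrib sum_distrib_right[symmetric] n_def algebra_simps)
    also have "\<dots> = s powr (k-1) * s * (\<Sum>x\<in>UNIV. W x y)"
      using n by (simp add: p_eq s_def algebra_simps)
    also have "\<dots> = s powr k * (\<Sum>x\<in>UNIV. W x y)"
      using s by (simp add: powr_diff)
    finally have le: "(\<Sum>x\<in>UNIV. f x y) \<le> s powr k * (\<Sum>x\<in>UNIV. W x y)" .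
    have fnn: "\<And>x. 0 \<le> f x y" using nonneg[OF y] by (simp add: f_def)
    have "(\<Sum>x\<in>UNIV. ennreal (f x y)) = ennreal (\<Sum>x\<in>UNIV. f x y)" using fnn by simp
    also have "\<dots> \<le> ennreal (s powr k * (\<Sum>x\<in>UNIV. W x y))" using le by (rule ennreal_leI)
    also have "\<dots> = (\<Sum>x\<in>UNIV. ennreal (s powr k) * ennreal (W x y))"
      using nonneg[OF y] by (simp add: ennreal_mult[symmetric] sum_distrib_left[symmetric] sum_nonneg)
    finally show "?thesis y" .
  qed
  have "(\<Sum>x\<in>UNIV. \<integral>\<^sup>+ y. ennreal (f x y) \<partial>\<mu>) = (\<integral>\<^sup>+ y. (\<Sum>x\<in>UNIV. ennreal (f x y)) \<partial>\<mu>)"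
    by (rule nn_integral_sum[symmetric]) measurable
  also have "\<dots> \<le> (\<integral>\<^sup>+ y. (\<Sum>x\<in>UNIV. ennreal (s powr k) * ennreal (W x y)) \<partial>\<mu>)"
    by (rule nn_integral_mono) (use pt in auto)
  also have "\<dots> = (\<Sum>x\<in>UNIV. ennreal (s powr k) * (\<integral>\<^sup>+ y. ennreal (W x y) \<partial>\<mu>))"
    by (subst nn_integral_sum) (auto simp: nn_integral_cmult)
  also have "\<dots> = of_nat CARD('a) * ennreal (s powr k)" using prob by simp
  finally have main: "(\<Sum>x\<in>UNIV. \<integral>\<^sup>+ y. ennreal (f x y) \<partial>\<mu>) \<le> of_nat CARD('a) * ennreal (s powr k)" .
  have "ennreal (1 / real CARD('a)) * (\<Sum>x\<in>UNIV. \<integral>\<^sup>+ y. ennreal (f x y) \<partial>\<mu>)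
      \<le> ennreal (1 / real CARD('a)) * (of_nat CARD('a) * ennreal (s powr k))"
    by (rule mult_left_mono[OF main]) simp
  also have "\<dots> = ennreal (s powr k)"
    by (simp add: ennreal_of_nat_eq_real_of_nat ennreal_mult[symmetric] mult.assoc[symmetric])
  finally show ?thesis by (simp add: f_def I_def s_def a_def c_def n_def)
qed

end
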